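(* Assume (V1), (V2), (V3), and (In). Then for every $n$, every $i=0,\dots,N_n-2$ and every $t\ge0$, $$t\,y^n_i(t)\,\big[v(y^n_{i+1}(t))-v(y^n_i(t))\big]\le\ell_n.$$
   Context: (V1): $v\in C^1([0,\infty))$ strictly decreasing; (V2): $v(0)=v_{\max}\in\mathbb{R}$; (V3): $\rho\mapsto\rho\,v'(\rho)$ is non-increasing on $[0,\infty)$. $\mathcal{M}_L$: nonnegative compactly supported Radon measures on $\mathbb{R}$ of mass $L>0$. (In): $\bar\rho\in\mathcal{M}_L\cap L^\infty(\mathbb{R})$; $\bar x_{\min}:=\min\mathrm{supp}\,\bar\rho$. For $n\in\mathbb{N}$: $N_n=2^n$, $\ell_n=2^{-n}L$, $\bar x^n_0=\bar x_{\min}$, $\bar x^n_i=\sup\{x:\int_{\bar x^n_{i-1}}^x\bar\rho<\ell_n\}$; $(x^n_i(t))$ solves $\dot x^n_{N_n}=v_{\max}$, $\dot x^n_i=v(\ell_n/(x^n_{i+1}-x^n_i))$, $x^n_i(0)=\bar x^n_i$; $y^n_i(t):=\ell_n/(x^n_{i+1}(t)-x^n_i(t))$, $i=0,\dots,N_n-1$. *)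

theory Defs
  imports "HOL-Analysis.Analysis"
begin

definition initial_datum :: "real \<Rightarrow> (real \<Rightarrow> real) \<Rightarrow> bool" where
  "initial_datum L rho \<longleftrightarrow>
     rho \<in> borel_measurable lborel \<and>
     integrable lborel rho \<and>
     (\<forall>x. 0 \<le> rho x) \<and>
     (\<exists>M. AE x in lborel. rho x \<le> M) \<and>
     (\<exists>R. AE x in lborel. R < \<bar>x\<bar> \<longrightarrow> rho x = 0) \<and>
     integral\<^sup>L lborel rho = L"

definition meas_supp :: "(real \<Rightarrow> real) \<Rightarrow> real set" where
  "meas_supp rho = {x. \<forall>e>0. 0 < (LINT y:{x-e<..<x+e}|lborel. rho y)}"

definition xmin :: "(real \<Rightarrow> real) \<Rightarrow> real" where
  "xmin rho = Inf (meas_supp rho)"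

text \<open>Length of a particle: ell_n = 2^{-n} L; number of particles N_n = 2^n.\<close>
definition ell :: "real \<Rightarrow> nat \<Rightarrow> real" where
  "ell L n = L / 2 ^ n"

fun xbar :: "real \<Rightarrow> (real \<Rightarrow> real) \<Rightarrow> nat \<Rightarrow> nat \<Rightarrow> real" where
  "xbar L rho n 0 = xmin rho"
| "xbar L rho n (Suc i) =
     Sup {x. (LINT y:{xbar L rho n i..x}|lborel. rho y) < ell L n}"

end

theory Submission imports Defs begin
lemma nonpos_lemma:
  fixes Z D :: "real \<Rightarrow> real"
  assumes cont: "continuous_on {0..} Z" and Z0: "Z 0 \<le> 0"
    and der: "\<And>t. 0 < t \<Longrightarrow> (Z has_real_derivative D t) (at t)"
    and neg: "\<And>t. 0 < t \<Longrightarrow> 0 < Z t \<Longrightarrow> D t \<le> 0"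
    and t: "0 \<le> t"
  shows "Z t \<le> 0"
proof (rule ccontr)
  assume "\<not> Z t \<le> 0"
  hence Zt: "0 < Z t" by simp
  with Z0 t have tpos: "0 < t" by (cases "t = 0") auto
  define W where "W = {0..t} \<inter> Z -` {..0}"
  have "continuous_on {0..t} Z" using cont by (rule continuous_on_subset) auto
  hence "closed W" unfolding W_def by (intro continuous_closed_preimage) auto
  moreover have "bounded W" unfolding W_def by (meson bounded_Int bounded_closed_interval)
  ultimately have "compact W" using compact_eq_bounded_closed by blast
  moreover have "0 \<in> W" using Z0 t unfolding W_def by auto
  ultimately obtain s where sW: "s \<in> W" and smax: "\<And>u. u \<in> W \<Longrightarrow> u \<le> s"
    using compact_attains_sup by (metis empty_iff)
  have s: "0 \<le> s" "s \<le> t" "Z s \<le> 0" using sW unfolding W_def by auto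
  have st: "s < t" using s Zt by (cases "s = t") auto
  have pos: "0 < Z u" if "s < u" "u \<le> t" for u
  proof (rule ccontr)
    assume "\<not> 0 < Z u"
    hence "u \<in> W" using that s unfolding W_def by auto
    with smax that show False by fastforce
  qed
  have "continuous_on {s..t} Z" using cont by (rule continuous_on_subset) (use s in auto)
  then obtain \<xi> where xi: "s < \<xi>" "\<xi> < t" "Z t - Z s = D \<xi> * (t - s)"
    using mvt[OF st, of Z "\<lambda>x h. D x * h"] der s
    by (metis has_field_derivative_def mult.commute le_less_trans linorder_not_le)
  have "D \<xi> \<le> 0" using neg[of \<xi>] pos[of \<xi>] xi s by auto
  hence "D \<xi> * (t - s) \<le> 0" using st by (simp add: mult_nonpos_nonneg)
  with xi s Zt show False by linarith
qed
theorem lemma3p9: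
  fixes v v' :: "real \<Rightarrow> real" and vmax L :: real and rho :: "real \<Rightarrow> real"
    and n :: nat and x :: "nat \<Rightarrow> real \<Rightarrow> real"
  assumes V1_deriv: "\<And>r. 0 \<le> r \<Longrightarrow> (v has_real_derivative v' r) (at r within {0..})"
    and V1_cont: "continuous_on {0..} v'"
    and V1_decr: "\<And>a b. 0 \<le> a \<Longrightarrow> a < b \<Longrightarrow> v b < v a"
    and V2: "v 0 = vmax"
    and V3: "\<And>a b. 0 \<le> a \<Longrightarrow> a \<le> b \<Longrightarrow> b * v' b \<le> a * v' a"
    and L_pos: "0 < L"
    and In: "initial_datum L rho"
    and init: "\<And>i. i \<le> 2 ^ n \<Longrightarrow> x i 0 = xbar L rho n i"
    and ode_leader: "\<And>t. 0 \<le> t \<Longrightarrow> (x (2 ^ n) has_real_derivative vmax) (at t within {0..})"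
    and ode: "\<And>i t. i < 2 ^ n \<Longrightarrow> 0 \<le> t \<Longrightarrow>
       (x i has_real_derivative v (ell L n / (x (Suc i) t - x i t))) (at t within {0..})"
    and ordered: "\<And>i t. i < 2 ^ n \<Longrightarrow> 0 \<le> t \<Longrightarrow> x i t < x (Suc i) t"
  shows "\<forall>i t. Suc i < 2 ^ n \<longrightarrow> 0 \<le> t \<longrightarrow>
     (let y = (\<lambda>j. ell L n / (x (Suc j) t - x j t)) in
       t * y i * (v (y (Suc i)) - v (y i)) \<le> ell L n)"
proof -
  define N :: nat where "N = 2 ^ n"
  define l where "l = ell L n"
  have lpos: "0 < l" using L_pos by (simp add: l_def ell_def)
  define d where "d j t = x (Suc j) t - x j t" for j t
  define Y where "Y j t = l / d j t" for j t
  define G where "G j t = (if Suc j < N then v (Y (Suc j) t) else vmax) - v (Y j t)" for j t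
  have dpos: "0 < d j t" if "j < N" "0 \<le> t" for j t
    using ordered[of j t] that by (simp add: d_def N_def)
  have Ypos: "0 < Y j t" if "j < N" "0 \<le> t" for j t
    using dpos[OF that] lpos by (simp add: Y_def)
  have vpnp: "v' r \<le> 0" if "0 < r" for r
    using V3[of 0 r] that by (simp add: mult_le_0_iff)
  have dder: "(d j has_real_derivative G j t) (at t within {0..})" if "j < N" "0 \<le> t" for j t
  proof (cases "Suc j < N")
    case True
    have "(x (Suc j) has_real_derivative v (Y (Suc j) t)) (at t within {0..})"
      using ode[of "Suc j" t] True that by (simp add: N_def Y_def d_def l_def)
    moreover have "(x j has_real_derivative v (Y j t)) (at t within {0..})"
      using ode[of j t] that by (simp add: N_def Y_def d_def l_def)
    ultimately show ?thesis unfolding d_def[abs_def] G_def using True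
      by (auto intro!: derivative_eq_intros)
  next
    case False
    hence SN: "Suc j = N" using that by simp
    have "(x (Suc j) has_real_derivative vmax) (at t within {0..})"
      using ode_leader[of t] SN that by (simp add: N_def)
    moreover have "(x j has_real_derivative v (Y j t)) (at t within {0..})"
      using ode[of j t] that by (simp add: N_def Y_def d_def l_def)
    ultimately show ?thesis unfolding d_def[abs_def] G_def using False
      by (auto intro!: derivative_eq_intros)
  qed
  have vYder: "((\<lambda>t. v (Y j t)) has_real_derivative v' (Y j t) * (- l * G j t / (d j t)^2)) (at t within {0..})"
    if "j < N" "0 \<le> t" for j t
  proof -
    have "(Y j has_real_derivative (- l * G j t / (d j t)^2)) (at t within {0..})"
      unfolding Y_def[abs_def] using dder[OF that] dpos[OF that]
      by (auto intro!: derivative_eq_intros simp: power2_eq_square field_simps)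
    moreover have "DERIV v (Y j t) :> v' (Y j t)"
      using V1_deriv[of "Y j t"] Ypos[OF that] at_within_interior[of "Y j t" "{0..}"]
      by (simp add: interior_real_atLeast)
    ultimately show ?thesis using DERIV_chain2 by blast
  qed
  define Gd where "Gd j t = (if Suc j < N then v' (Y (Suc j) t) * (- l * G (Suc j) t / (d (Suc j) t)^2) else 0)
      - v' (Y j t) * (- l * G j t / (d j t)^2)" for j t
  have Gder: "(G j has_real_derivative Gd j t) (at t within {0..})" if "j < N" "0 \<le> t" for j t
  proof (cases "Suc j < N")
    case True
    have eqG: "G j = (\<lambda>t. v (Y (Suc j) t) - v (Y j t))" by (rule ext) (simp add: G_def True)
    show ?thesis unfolding eqG using True vYder[OF that] vYder[OF True that(2)]
      by (auto intro!: derivative_eq_intros simp: Gd_def)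
  next
    case False
    have eqG: "G j = (\<lambda>t. vmax - v (Y j t))" by (rule ext) (simp add: G_def False)
    show ?thesis unfolding eqG using False vYder[OF that]
      by (auto intro!: derivative_eq_intros simp: Gd_def)
  qed
  have main: "\<forall>t\<ge>0. t * G j t \<le> d j t" if "j < N" and IHj: "Suc j < N \<Longrightarrow> \<forall>t\<ge>0. t * G (Suc j) t \<le> d (Suc j) t" for j
  proof (intro allI impI)
    fix t :: real assume t: "0 \<le> t"
    define Z where "Z s = s * G j s - d j s" for s
    have Zder: "(Z has_real_derivative s * Gd j s) (at s within {0..})" if "0 \<le> s" for s
      unfolding Z_def[abs_def] using Gder[OF \<open>j < N\<close> that] dder[OF \<open>j < N\<close> that]
      by (auto intro!: derivative_eq_intros)
    have "Z t \<le> 0"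
    proof (rule nonpos_lemma[where Z = Z and D = "\<lambda>s. s * Gd j s"])
      show "continuous_on {0..} Z" by (rule DERIV_continuous_on[where D = "\<lambda>s. s * Gd j s"]) (use Zder in auto)
      show "Z 0 \<le> 0" using dpos[OF \<open>j < N\<close>, of 0] by (simp add: Z_def)
      show "(Z has_real_derivative s * Gd j s) (at s)" if "0 < s" for s
        using Zder[of s] that at_within_interior[of s "{0..}"] by (simp add: interior_real_atLeast)
      show "s * Gd j s \<le> 0" if s: "0 < s" "0 < Z s" for s
      proof -
        have dj: "0 < d j s" using dpos[OF \<open>j < N\<close>] s by simp
        have Yj: "0 < Y j s" using Ypos[OF \<open>j < N\<close>] s by simp
        have big: "d j s < s * G j s" using s by (simp add: Z_def)
        have "0 < s * G j s" using big dj by linarith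
        hence Gpos: "0 < G j s" using s by (simp add: zero_less_mult_iff)
        have q: "1 < s * G j s / d j s" using big dj by simp
        define b where "b = - v' (Y j s) * Y j s"
        have b0: "0 \<le> b" using vpnp[OF Yj] Yj by (simp add: b_def mult_nonpos_nonneg)
        have term2: "v' (Y j s) * (- l * G j s / (d j s)^2) = b * (G j s / d j s)"
          using dj by (simp add: b_def Y_def power2_eq_square field_simps)
        have "b * 1 \<le> b * (s * G j s / d j s)" using b0 q by (intro mult_left_mono) auto
        hence bq: "b \<le> s * (b * (G j s / d j s))" by (simp add: algebra_simps)
        show ?thesis
        proof (cases "Suc j < N")
          case False
          hence "s * Gd j s = - s * (b * (G j s / d j s))" using term2 by (simp add: Gd_def)
          also have "\<dots> \<le> 0" using b0 Gpos dj s by simp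
          finally show ?thesis .
        next
          case True
          have d1: "0 < d (Suc j) s" using dpos[OF True] s by simp
          have Y1: "0 < Y (Suc j) s" using Ypos[OF True] s by simp
          define a where "a = - v' (Y (Suc j) s) * Y (Suc j) s"
          have a0: "0 \<le> a" using vpnp[OF Y1] Y1 by (simp add: a_def mult_nonpos_nonneg)
          have term1: "v' (Y (Suc j) s) * (- l * G (Suc j) s / (d (Suc j) s)^2) = a * (G (Suc j) s / d (Suc j) s)"
            using d1 by (simp add: a_def Y_def power2_eq_square field_simps)
          have IH: "s * G (Suc j) s \<le> d (Suc j) s" using IHj[OF True] s by simp
          have "s * (G (Suc j) s / d (Suc j) s) \<le> 1" using IH d1 by (simp add: field_simps)
          hence "a * (s * (G (Suc j) s / d (Suc j) s)) \<le> a * 1"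
            using a0 by (intro mult_left_mono) auto
          hence aq: "s * (a * (G (Suc j) s / d (Suc j) s)) \<le> a"
            by (simp add: algebra_simps)
          have "v (Y j s) < v (Y (Suc j) s)" using Gpos True by (simp add: G_def)
          hence "Y (Suc j) s < Y j s"
          proof (rule contrapos_pp)
            assume "\<not> Y (Suc j) s < Y j s"
            hence "Y j s = Y (Suc j) s \<or> Y j s < Y (Suc j) s" by auto
            thus "\<not> v (Y j s) < v (Y (Suc j) s)"
              using V1_decr[of "Y j s" "Y (Suc j) s"] Yj by auto
          qed
          hence ab: "a \<le> b" using V3[of "Y (Suc j) s" "Y j s"] Y1 by (simp add: a_def b_def mult.commute)
          have "s * Gd j s = s * (a * (G (Suc j) s / d (Suc j) s)) - s * (b * (G j s / d j s))"
            using True term1 term2 by (simp add: Gd_def algebra_simps)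
          also have "\<dots> \<le> 0" using aq bq ab by linarith
          finally show ?thesis .
        qed
      qed
    qed (use t in auto)
    thus "t * G j t \<le> d j t" by (simp add: Z_def)
  qed
  have all: "\<forall>t\<ge>0. t * G j t \<le> d j t" if "j < N" for j
  proof -
    have "j \<le> N - 1" using that by simp
    thus ?thesis
    proof (induction j rule: inc_induct)
      case base
      show ?case using main[of "N - 1"] N_def by simp
    next
      case (step m)
      show ?case using main[of m] step by simp
    qed
  qed
  show ?thesis
  proof (intro allI impI)
    fix i and t :: real assume i: "Suc i < 2 ^ n" and t: "0 \<le> t"
    have iN: "i < N" "Suc i < N" using i by (auto simp: N_def)
    have di: "0 < d i t" using dpos[OF iN(1) t] .
    have key: "t * G i t \<le> d i t" using all[OF iN(1)] t by simp
    have eq: "(\<lambda>j. ell L n / (x (Suc j) t - x j t)) = (\<lambda>j. Y j t)"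
      by (simp add: Y_def d_def l_def)
    have "t * Y i t * (v (Y (Suc i) t) - v (Y i t)) = l * (t * G i t / d i t)"
      using iN by (simp add: G_def Y_def)
    also have "\<dots> \<le> l * 1" using key di lpos by (intro mult_left_mono) auto
    finally show "let y = (\<lambda>j. ell L n / (x (Suc j) t - x j t)) in
       t * y i * (v (y (Suc i)) - v (y i)) \<le> ell L n" unfolding eq Let_def by (simp add: l_def)
  qed
qed

end
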